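(* Let $m,n$ be positive integers and let $\mathbf{a},\mathbf{b}\in\mathcal{T}^{n+1}$, $\mathbf{c},\mathbf{d}\in\mathcal{T}^{n}$, $\mathbf{f},\mathbf{g}\in\mathcal{T}^{m+1}$, $\mathbf{h},\mathbf{e}\in\mathcal{T}^{m}$. Set $\mathbf{a}'=\mathbf{a}/0$, $\mathbf{b}'=\mathbf{b}/0$, $\mathbf{c}'=0/\mathbf{c}$, $\mathbf{d}'=0/\mathbf{d}$, $\mathbf{f}'=\mathbf{f}/0$, $\mathbf{g}'=\mathbf{g}/0$, $\mathbf{h}'=0/\mathbf{h}$, $\mathbf{e}'=0/\mathbf{e}$, and define the $(2m+1)\times(2n+1)$ matrices \begin{align*} Q&=\mathbf{f}'^{*t}\mathbf{a}'+\mathbf{g}'^t\mathbf{c}'-\mathbf{e}'^t\mathbf{b}'^*+\mathbf{h}'^t\mathbf{d}',\\ R&=\mathbf{f}'^{*t}\mathbf{b}'+\mathbf{g}'^{*t}\mathbf{d}'+\mathbf{e}'^t\mathbf{a}'^*-\mathbf{h}'^{*t}\mathbf{c}',\\ S&=\mathbf{g}'^{*t}\mathbf{a}'-\mathbf{f}'^t\mathbf{c}'-\mathbf{h}'^t\mathbf{b}'-\mathbf{e}'^t\mathbf{d}'^*,\\ T&=\mathbf{g}'^{t}\mathbf{b}'-\mathbf{f}'^t\mathbf{d}'+\mathbf{h}'^{*t}\mathbf{a}'+\mathbf{e}'^t\mathbf{c}'^*. \end{align*} Then every entry of $Q,R,S,T$ lies in $\mathcal{T}$ (i.e. $Q,R,S,T\in\mathcal{T}^{(2m+1)\times(2n+1)}$),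 and \[ (\psi_Q\psi_Q^*+\psi_R\psi_R^*+\psi_S\psi_S^*+\psi_T\psi_T^* )(x,y)=(\psi_{\mathbf{a}}\psi^*_{\mathbf{a}}+\psi_{\mathbf{b}}\psi^*_{\mathbf{b}}+\psi_{\mathbf{c}}\psi^*_{\mathbf{c}}+\psi_{\mathbf{d}}\psi^*_{\mathbf{d}})(x^2)\,(\psi_{\mathbf{e}}\psi^*_{\mathbf{e}}+\psi_{\mathbf{f}}\psi^*_{\mathbf{f}}+\psi_{\mathbf{g}}\psi^*_{\mathbf{g}}+\psi_{\mathbf{h}}\psi^*_{\mathbf{h}})(y^2). \]
   Context: $\mathcal{R}$ is a commutative ring with identity equipped with an involutive ring automorphism $*$, extended to $\mathcal{R}[x^{\pm1}]$ and $\mathcal{R}[x^{\pm1},y^{\pm1}]$ by acting on coefficients and sending $x\mapsto x^{-1}$, $y\mapsto y^{-1}$. $\mathcal{T}$ is a multiplicatively closed subset of $\mathcal{R}\setminus\{0\}$ with $-1\in\mathcal{T}$ and $\mathcal{T}^*=\mathcal{T}$. For $\mathbf{a}=(a_0,\dots,a_{l-1})\in\mathcal{R}^l$: $\mathbf{a}^*=(a_{l-1}^*,\dots,a_0^* )$, $\phi_{\mathbf{a}}(x)=\sum_{i=0}^{l-1}a_ix^i$, $\psi_{\mathbf{a}}(x)=x^{1-l}\phi_{\mathbf{a}}(x^2)$, $\mathbf{a}/0=(a_0,0,a_1,0,\dots,0,a_{l-1})\in\mathcal{R}^{2l-1}$ and $0/\mathbf{a}=(0,a_0,0,a_1,\dots,0,a_{l-1},0)\in\mathcal{R}^{2l+1}$.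 Vectors are $1\times k$ matrices, $t$ is transpose, so $\mathbf{u}^t\mathbf{v}$ is an outer product matrix. For $A\in\mathcal{R}^{p\times q}$ with rows $\mathbf{a}_0,\dots,\mathbf{a}_{p-1}$, $\psi_A(x,y)=\sum_{i=0}^{p-1}\psi_{\mathbf{a}_i}(x)\,y^{2i+1-p}$. *)

theory Defs
  imports "HOL-Library.Poly_Mapping" "HOL-Library.Product_Plus"
begin

(* Laurent polynomials over a commutative ring 'a:
  one variable: int =>0 'a (coefficient of x^k at key k),
  two variables: (int x int) =>0 'a (coefficient of x^i y^j at key (i,j)).
  Vectors are lists, matrices are lists of rows. *)

definition vstar :: "('a \<Rightarrow> 'a) \<Rightarrow> 'a list \<Rightarrow> 'a list" where
  "vstar cj a = rev (map cj a)"

definition vslash0 :: "'a::zero list \<Rightarrow> 'a list" where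
  "vslash0 a = map (\<lambda>j. if even j then a ! (j div 2) else 0) [0..<2 * length a - 1]"

definition v0slash :: "'a::zero list \<Rightarrow> 'a list" where
  "v0slash a = map (\<lambda>j. if odd j then a ! (j div 2) else 0) [0..<2 * length a + 1]"

definition outer :: "'a::times list \<Rightarrow> 'a list \<Rightarrow> 'a list list" where
  "outer u v = map (\<lambda>x. map (\<lambda>y. x * y) v) u"

definition madd :: "'a::plus list list \<Rightarrow> 'a list list \<Rightarrow> 'a list list" where
  "madd A B = map2 (map2 (+)) A B"

definition msub :: "'a::minus list list \<Rightarrow> 'a list list \<Rightarrow> 'a list list" where
  "msub A B = map2 (map2 (-)) A B"

(* psi_a(x) = x^(1-l) phi_a(x^2) = sum_i a_i x^(2i+1-l) *)
definition psi :: "'a::comm_ring_1 list \<Rightarrow> int \<Rightarrow>\<^sub>0 'a" where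
  "psi a = (\<Sum>i<length a. Poly_Mapping.single (2 * int i + 1 - int (length a)) (a ! i))"

definition psiM :: "'a::comm_ring_1 list list \<Rightarrow> (int \<times> int) \<Rightarrow>\<^sub>0 'a" where
  "psiM A = (\<Sum>i<length A. \<Sum>j<length (A ! i).
     Poly_Mapping.single (2 * int j + 1 - int (length (A ! i)), 2 * int i + 1 - int (length A)) (A ! i ! j))"

definition lpstar1 :: "('a::comm_ring_1 \<Rightarrow> 'a) \<Rightarrow> (int \<Rightarrow>\<^sub>0 'a) \<Rightarrow> int \<Rightarrow>\<^sub>0 'a" where
  "lpstar1 cj p = (\<Sum>k\<in>Poly_Mapping.keys p. Poly_Mapping.single (- k) (cj (Poly_Mapping.lookup p k)))"

definition lpstar2 :: "('a::comm_ring_1 \<Rightarrow> 'a) \<Rightarrow> ((int \<times> int) \<Rightarrow>\<^sub>0 'a) \<Rightarrow> (int \<times> int) \<Rightarrow>\<^sub>0 'a" where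
  "lpstar2 cj p = (\<Sum>k\<in>Poly_Mapping.keys p.
     Poly_Mapping.single (- fst k, - snd k) (cj (Poly_Mapping.lookup p k)))"

definition subst_x_sq :: "(int \<Rightarrow>\<^sub>0 'a::comm_ring_1) \<Rightarrow> (int \<times> int) \<Rightarrow>\<^sub>0 'a" where
  "subst_x_sq p = (\<Sum>k\<in>Poly_Mapping.keys p. Poly_Mapping.single (2 * k, 0) (Poly_Mapping.lookup p k))"

definition subst_y_sq :: "(int \<Rightarrow>\<^sub>0 'a::comm_ring_1) \<Rightarrow> (int \<times> int) \<Rightarrow>\<^sub>0 'a" where
  "subst_y_sq p = (\<Sum>k\<in>Poly_Mapping.keys p. Poly_Mapping.single (0, 2 * k) (Poly_Mapping.lookup p k))"

end

theory Submission
  imports Defs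
begin


definition opm :: "('k \<Rightarrow> 'l) \<Rightarrow> ('a::zero \<Rightarrow> 'b::comm_monoid_add) \<Rightarrow> ('k \<Rightarrow>\<^sub>0 'a) \<Rightarrow> ('l \<Rightarrow>\<^sub>0 'b)" where
  "opm \<phi> c p = (\<Sum>k\<in>Poly_Mapping.keys p. Poly_Mapping.single (\<phi> k) (c (Poly_Mapping.lookup p k)))"

lemma opm_K:
  assumes "finite K" "Poly_Mapping.keys p \<subseteq> K" "c 0 = 0"
  shows "opm \<phi> c p = (\<Sum>k\<in>K. Poly_Mapping.single (\<phi> k) (c (Poly_Mapping.lookup p k)))"
  unfolding opm_def
  by (rule sum.mono_neutral_left) (use assms in \<open>auto simp: in_keys_iff\<close>)

lemma opm_zero[simp]: "opm \<phi> c 0 = 0"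
  by (simp add: opm_def)

lemma opm_add:
  assumes "\<And>x y. c (x + y) = c x + c y" "c 0 = 0"
  shows "opm \<phi> c (p + q) = opm \<phi> c p + opm \<phi> c q"
proof -
  let ?K = "Poly_Mapping.keys p \<union> Poly_Mapping.keys q"
  have "opm \<phi> c (p + q) = (\<Sum>k\<in>?K. Poly_Mapping.single (\<phi> k) (c (Poly_Mapping.lookup (p+q) k)))"
    by (rule opm_K) (use assms keys_add[of p q] in auto)
  also have "\<dots> = (\<Sum>k\<in>?K. Poly_Mapping.single (\<phi> k) (c (Poly_Mapping.lookup p k)))
      + (\<Sum>k\<in>?K. Poly_Mapping.single (\<phi> k) (c (Poly_Mapping.lookup q k)))"
    by (simp add: lookup_add assms single_add sum.distrib)
  also have "\<dots> = opm \<phi> c p + opm \<phi> c q"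
    by (subst (1 2) opm_K[where K="?K"]) (use assms in auto)
  finally show ?thesis .
qed

lemma opm_single:
  assumes "c 0 = 0"
  shows "opm \<phi> c (Poly_Mapping.single k v) = Poly_Mapping.single (\<phi> k) (c v)"
  by (subst opm_K[where K="{k}"]) (use assms in auto)

lemma opm_sum:
  assumes "\<And>x y. c (x + y) = c x + c y" "c 0 = 0"
  shows "opm \<phi> c (\<Sum>i\<in>I. f i) = (\<Sum>i\<in>I. opm \<phi> c (f i))"
  by (induction I rule: infinite_finite_induct) (auto simp: opm_add assms)

lemma pm_expand: "p = (\<Sum>k\<in>Poly_Mapping.keys p. Poly_Mapping.single k (Poly_Mapping.lookup p k))"
proof (rule poly_mapping_eqI)
  fix x
  show "Poly_Mapping.lookup p x = Poly_Mapping.lookup (\<Sum>k\<in>Poly_Mapping.keys p. Poly_Mapping.single k (Poly_Mapping.lookup p k)) x"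
    by (cases "x \<in> Poly_Mapping.keys p") (auto simp: lookup_sum lookup_single in_keys_iff when_def)
qed

lemma opm_id: "opm (\<lambda>k. k) (\<lambda>x. x) p = p"
  unfolding opm_def by (rule pm_expand[symmetric])

lemma opm_comp:
  assumes "c1 0 = 0" "\<And>x y. c2 (x + y) = c2 x + c2 y" "c2 0 = 0"
  shows "opm \<phi>2 c2 (opm \<phi>1 c1 p) = opm (\<lambda>k. \<phi>2 (\<phi>1 k)) (\<lambda>x. c2 (c1 x)) p"
proof -
  have e: "opm \<phi>1 c1 p = (\<Sum>k\<in>Poly_Mapping.keys p. Poly_Mapping.single (\<phi>1 k) (c1 (Poly_Mapping.lookup p k)))"
    by (simp add: opm_def)
  show ?thesis unfolding e by (simp add: opm_sum opm_single assms, simp add: opm_def)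
qed

lemma opm_mult:
  fixes c :: "'a::semiring_0 \<Rightarrow> 'b::semiring_0" and \<phi> :: "'k::monoid_add \<Rightarrow> 'l::monoid_add"
  assumes "\<And>x y. c (x + y) = c x + c y" "c 0 = 0" "\<And>x y. c (x * y) = c x * c y"
    "\<And>k l. \<phi> (k + l) = \<phi> k + \<phi> l"
  shows "opm \<phi> c (p * q) = opm \<phi> c p * opm \<phi> c q"
proof -
  have pq: "p * q = (\<Sum>k\<in>Poly_Mapping.keys p. \<Sum>l\<in>Poly_Mapping.keys q.
      Poly_Mapping.single (k + l) (Poly_Mapping.lookup p k * Poly_Mapping.lookup q l))"
    by (subst (1) pm_expand[of p], subst (1) pm_expand[of q])
       (simp add: sum_distrib_left sum_distrib_right mult_single, rule sum.swap)
  show ?thesis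
    unfolding pq
    apply (simp only: opm_sum assms opm_single)
    apply (simp add: opm_def sum_distrib_left sum_distrib_right mult_single assms)
    apply (rule sum.swap)
    done
qed


lemma sum_pairs: "(\<Sum>j<2*l. g j) = (\<Sum>k<l. g (2*k) + g (2*k+1))" for g :: "nat \<Rightarrow> 'b::comm_monoid_add"
  by (induction l) (auto simp: add.assoc)

lemma psi_vslash0:
  assumes "length a \<ge> 1"
  shows "psi (vslash0 a) = opm (\<lambda>k. 2*k) (\<lambda>x. x) (psi a)"
proof -
  let ?l = "length a"
  define g where "g j = Poly_Mapping.single (2 * int j + 1 - int (2*?l - 1)) (if even j then a ! (j div 2) else 0)" for j
  have len: "length (vslash0 a) = 2*?l - 1" by (simp add: vslash0_def)
  have nth: "j < 2*?l - 1 \<Longrightarrow> vslash0 a ! j = (if even j then a ! (j div 2) else 0)" for j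
    by (simp add: vslash0_def)
  have "psi (vslash0 a) = (\<Sum>j<2*?l-1. g j)"
    unfolding psi_def len by (rule sum.cong) (auto simp: nth g_def)
  also have "\<dots> = (\<Sum>j<2*?l. g j)"
  proof -
    have "2*?l = Suc (2*?l-1)" using assms by simp
    then have "(\<Sum>j<2*?l. g j) = (\<Sum>j<2*?l-1. g j) + g (2*?l-1)" by (metis sum.lessThan_Suc)
    moreover have "odd (2*?l-1)" using assms by (cases a) auto
    then have "g (2*?l-1) = 0" by (simp add: g_def)
    ultimately show ?thesis by simp
  qed
  also have "\<dots> = (\<Sum>k<?l. Poly_Mapping.single (2 * (2 * int k + 1 - int ?l)) (a ! k))"
    unfolding sum_pairs using assms by (intro sum.cong) (auto simp: g_def algebra_simps of_nat_diff)
  also have "\<dots> = opm (\<lambda>k. 2*k) (\<lambda>x. x) (psi a)"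
    unfolding psi_def by (simp add: opm_sum opm_single)
  finally show ?thesis .
qed

lemma psi_v0slash:
  shows "psi (v0slash a) = opm (\<lambda>k. 2*k) (\<lambda>x. x) (psi a)"
proof -
  let ?l = "length a"
  define g where "g j = Poly_Mapping.single (2 * int j + 1 - int (2*?l + 1)) (if odd j then a ! (j div 2) else 0)" for j
  have len: "length (v0slash a) = 2*?l + 1" by (simp add: v0slash_def)
  have nth: "j < 2*?l + 1 \<Longrightarrow> v0slash a ! j = (if odd j then a ! (j div 2) else 0)" for j
    by (simp add: v0slash_def nth_append; presburger)
  have "psi (v0slash a) = (\<Sum>j<2*?l+1. g j)"
    unfolding psi_def len by (rule sum.cong) (auto simp: nth g_def)
  also have "\<dots> = (\<Sum>j<2*?l. g j)"
    by (simp add: g_def)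
  also have "\<dots> = (\<Sum>k<?l. Poly_Mapping.single (2 * (2 * int k + 1 - int ?l)) (a ! k))"
    unfolding sum_pairs by (intro sum.cong) (auto simp: g_def algebra_simps)
  also have "\<dots> = opm (\<lambda>k. 2*k) (\<lambda>x. x) (psi a)"
    unfolding psi_def by (simp add: opm_sum opm_single)
  finally show ?thesis .
qed

lemma psi_vstar:
  assumes "cj 0 = 0" "\<And>x y. cj (x + y) = cj x + cj y"
  shows "psi (vstar cj v) = opm uminus cj (psi v)"
proof -
  let ?l = "length v"
  have "psi (vstar cj v) = (\<Sum>i<?l. Poly_Mapping.single (2 * int i + 1 - int ?l) (cj (v ! (?l - Suc i))))"
    unfolding psi_def vstar_def by (intro sum.cong) (auto simp: rev_nth)
  also have "\<dots> = (\<Sum>i<?l. Poly_Mapping.single (2 * int (?l - Suc (?l - Suc i)) + 1 - int ?l) (cj (v ! (?l - Suc i))))"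
    by (intro sum.cong) (auto simp: of_nat_diff)
  also have "\<dots> = (\<Sum>i<?l. Poly_Mapping.single (2 * int (?l - Suc i) + 1 - int ?l) (cj (v ! i)))"
    by (rule sum.nat_diff_reindex[where g = "\<lambda>j. Poly_Mapping.single (2 * int (?l - Suc j) + 1 - int ?l) (cj (v ! j))"])
  also have "\<dots> = (\<Sum>i<?l. Poly_Mapping.single (- (2 * int i + 1 - int ?l)) (cj (v ! i)))"
    by (intro sum.cong) (auto simp: of_nat_diff algebra_simps)
  also have "\<dots> = opm uminus cj (psi v)"
    unfolding psi_def by (simp add: opm_sum opm_single assms)
  finally show ?thesis .
qed


definition shp :: "'a list list \<Rightarrow> nat \<Rightarrow> nat \<Rightarrow> bool" where
  "shp A p q \<longleftrightarrow> length A = p \<and> (\<forall>i<p. length (A ! i) = q)"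

lemma shp_outer: "shp (outer u v) (length u) (length v)"
  by (simp add: shp_def outer_def)

lemma shp_madd: "shp A p q \<Longrightarrow> shp B p q \<Longrightarrow> shp (madd A B) p q"
  by (simp add: shp_def madd_def)

lemma shp_msub: "shp A p q \<Longrightarrow> shp B p q \<Longrightarrow> shp (msub A B) p q"
  by (simp add: shp_def msub_def)

lemma nth_madd: "shp A p q \<Longrightarrow> shp B p q \<Longrightarrow> i < p \<Longrightarrow> j < q \<Longrightarrow> madd A B ! i ! j = A!i!j + B!i!j"
  by (simp add: shp_def madd_def)

lemma nth_msub: "shp A p q \<Longrightarrow> shp B p q \<Longrightarrow> i < p \<Longrightarrow> j < q \<Longrightarrow> msub A B ! i ! j = A!i!j - B!i!j"
  by (simp add: shp_def msub_def)

lemma nth_outer: "i < length u \<Longrightarrow> j < length v \<Longrightarrow> outer u v ! i ! j = u!i * v!j"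
  by (simp add: outer_def)

lemma psiM_shp: "shp A p q \<Longrightarrow> psiM A = (\<Sum>i<p. \<Sum>j<q.
     Poly_Mapping.single (2 * int j + 1 - int q, 2 * int i + 1 - int p) (A ! i ! j))"
  unfolding psiM_def shp_def by (intro sum.cong) auto

lemma psiM_madd: "shp A p q \<Longrightarrow> shp B p q \<Longrightarrow> psiM (madd A B) = psiM A + psiM B"
  by (simp add: psiM_shp[of _ p q] shp_madd nth_madd single_add sum.distrib)

lemma psiM_msub: "shp A p q \<Longrightarrow> shp B p q \<Longrightarrow> psiM (msub A B) = psiM A - psiM B"
  by (simp add: psiM_shp[of _ p q] shp_msub nth_msub single_diff sum_subtractf)

definition XX :: "(int \<Rightarrow>\<^sub>0 'a::comm_ring_1) \<Rightarrow> (int \<times> int) \<Rightarrow>\<^sub>0 'a" where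
  "XX = opm (\<lambda>k. (k, 0)) (\<lambda>x. x)"
definition YY :: "(int \<Rightarrow>\<^sub>0 'a::comm_ring_1) \<Rightarrow> (int \<times> int) \<Rightarrow>\<^sub>0 'a" where
  "YY = opm (\<lambda>k. (0, k)) (\<lambda>x. x)"

lemma psiM_outer: "psiM (outer u v) = YY (psi u) * XX (psi v)"
proof -
  have "psiM (outer u v) = (\<Sum>i<length u. \<Sum>j<length v.
     Poly_Mapping.single (2 * int j + 1 - int (length v), 2 * int i + 1 - int (length u)) (u ! i * v ! j))"
    by (simp add: psiM_shp[OF shp_outer] nth_outer)
  also have "\<dots> = YY (psi u) * XX (psi v)"
    unfolding YY_def XX_def psi_def
    by (simp add: opm_sum opm_single sum_distrib_left sum_distrib_right mult_single, rule sum.swap)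
  finally show ?thesis .
qed


lemma lpstar1_opm: "lpstar1 cj = opm uminus cj"
  by (rule ext) (simp add: lpstar1_def opm_def)
lemma lpstar2_opm: "lpstar2 cj = opm (\<lambda>k. (- fst k, - snd k)) cj"
  by (rule ext) (simp add: lpstar2_def opm_def)
lemma sx_opm: "subst_x_sq = opm (\<lambda>k. (2*k, 0)) (\<lambda>x. x)"
  by (rule ext) (simp add: subst_x_sq_def opm_def)
lemma sy_opm: "subst_y_sq = opm (\<lambda>k. (0, 2*k)) (\<lambda>x. x)"
  by (rule ext) (simp add: subst_y_sq_def opm_def)

context
  fixes cj :: "'a::comm_ring_1 \<Rightarrow> 'a"
  assumes cadd: "\<And>x y. cj (x + y) = cj x + cj y"
    and cmult: "\<And>x y. cj (x * y) = cj x * cj y"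
    and cinv: "\<And>x. cj (cj x) = x"
begin

lemma c0: "cj 0 = 0"
  using cadd[of 0 0] by simp

lemma st2_add: "lpstar2 cj (p + q) = lpstar2 cj p + lpstar2 cj q"
  by (simp add: lpstar2_opm opm_add cadd c0)

lemma st2_uminus: "lpstar2 cj (- p) = - lpstar2 cj p"
  using st2_add[of p "-p"] by (simp add: lpstar2_opm eq_neg_iff_add_eq_0 add.commute)

lemma st2_diff: "lpstar2 cj (p - q) = lpstar2 cj p - lpstar2 cj q"
  using st2_add[of p "-q"] st2_uminus[of q] by simp

lemma st2_mult: "lpstar2 cj (p * q) = lpstar2 cj p * lpstar2 cj q"
  by (simp add: lpstar2_opm opm_mult cadd c0 cmult)

lemma st2_inv: "lpstar2 cj (lpstar2 cj p) = p"
  by (simp add: lpstar2_opm opm_comp cadd c0 cinv opm_id)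

lemma sx_add: "subst_x_sq (p + q) = subst_x_sq p + subst_x_sq q"
  by (simp add: sx_opm opm_add)
lemma sx_mult: "subst_x_sq (p * q) = subst_x_sq p * subst_x_sq q"
  by (simp add: sx_opm opm_mult)
lemma sy_add: "subst_y_sq (p + q) = subst_y_sq p + subst_y_sq q"
  by (simp add: sy_opm opm_add)
lemma sy_mult: "subst_y_sq (p * q) = subst_y_sq p * subst_y_sq q"
  by (simp add: sy_opm opm_mult)

lemma sx_st: "subst_x_sq (lpstar1 cj p) = lpstar2 cj (subst_x_sq p)"
  by (simp add: sx_opm lpstar1_opm lpstar2_opm opm_comp c0 cadd)
lemma sy_st: "subst_y_sq (lpstar1 cj p) = lpstar2 cj (subst_y_sq p)"
  by (simp add: sy_opm lpstar1_opm lpstar2_opm opm_comp c0 cadd)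

lemma X1: "length a \<ge> 1 \<Longrightarrow> XX (psi (vslash0 a)) = subst_x_sq (psi a)"
  by (simp add: psi_vslash0 XX_def sx_opm opm_comp)
lemma X2: "XX (psi (v0slash a)) = subst_x_sq (psi a)"
  by (simp add: psi_v0slash XX_def sx_opm opm_comp)
lemma X3: "length a \<ge> 1 \<Longrightarrow> XX (psi (vstar cj (vslash0 a))) = lpstar2 cj (subst_x_sq (psi a))"
  by (simp add: psi_vstar c0 cadd psi_vslash0 XX_def sx_opm lpstar2_opm opm_comp)
lemma X4: "XX (psi (vstar cj (v0slash a))) = lpstar2 cj (subst_x_sq (psi a))"
  by (simp add: psi_vstar c0 cadd psi_v0slash XX_def sx_opm lpstar2_opm opm_comp)
lemma Y1: "length a \<ge> 1 \<Longrightarrow> YY (psi (vslash0 a)) = subst_y_sq (psi a)"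
  by (simp add: psi_vslash0 YY_def sy_opm opm_comp)
lemma Y2: "YY (psi (v0slash a)) = subst_y_sq (psi a)"
  by (simp add: psi_v0slash YY_def sy_opm opm_comp)
lemma Y3: "length a \<ge> 1 \<Longrightarrow> YY (psi (vstar cj (vslash0 a))) = lpstar2 cj (subst_y_sq (psi a))"
  by (simp add: psi_vstar c0 cadd psi_vslash0 YY_def sy_opm lpstar2_opm opm_comp)
lemma Y4: "YY (psi (vstar cj (v0slash a))) = lpstar2 cj (subst_y_sq (psi a))"
  by (simp add: psi_vstar c0 cadd psi_v0slash YY_def sy_opm lpstar2_opm opm_comp)

end


lemma ring_id:
  fixes A B C D E F G H sA sB sC sD sE sF sG sH :: "'b::comm_ring_1"
  shows "(sF*A + G*C - E*sB + H*D) * (F*sA + sG*sC - sE*B + sH*sD)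
       + (sF*B + sG*D + E*sA - sH*C) * (F*sB + G*sD + sE*A - H*sC)
       + (sG*A - F*C - H*B - E*sD) * (G*sA - sF*sC - sH*sB - sE*D)
       + (G*B - F*D + sH*A + E*sC) * (sG*sB - sF*sD + H*sA + sE*C)
       = (A*sA + B*sB + C*sC + D*sD) * (E*sE + F*sF + G*sG + H*sH)"
  by (simp add: algebra_simps)

lemma len_vslash0[simp]: "length (vslash0 a) = 2 * length a - 1"
  by (simp add: vslash0_def)
lemma len_v0slash[simp]: "length (v0slash a) = 2 * length a + 1"
  by (simp add: v0slash_def)
lemma len_vstar[simp]: "length (vstar cj a) = length a"
  by (simp add: vstar_def)
lemma shp_outer': "length u = p \<Longrightarrow> length v = q \<Longrightarrow> shp (outer u v) p q"
  using shp_outer by blast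


lemma nth_vslash0: "j < 2 * length a - 1 \<Longrightarrow> vslash0 a ! j = (if even j then a ! (j div 2) else 0)"
  by (simp add: vslash0_def)
lemma nth_v0slash: "j < 2 * length a + 1 \<Longrightarrow> v0slash a ! j = (if odd j then a ! (j div 2) else 0)"
  by (simp add: v0slash_def nth_append; presburger)
lemma nth_vstar: "j < length v \<Longrightarrow> vstar cj v ! j = cj (v ! (length v - 1 - j))"
  by (simp add: vstar_def rev_nth)

lemma mem_from_entries: "shp M p q \<Longrightarrow> (\<And>i j. i < p \<Longrightarrow> j < q \<Longrightarrow> M!i!j \<in> TT) \<Longrightarrow> \<forall>row\<in>set M. set row \<subseteq> TT"
  unfolding shp_def by (auto simp: in_set_conv_nth)



theorem lemma3p2:
  fixes cj :: "'a::comm_ring_1 \<Rightarrow> 'a" and TT :: "'a set"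
    and m n :: nat and a b c d f g h e :: "'a list"
  assumes cj_add: "\<forall>x y. cj (x + y) = cj x + cj y"
    and cj_mult: "\<forall>x y. cj (x * y) = cj x * cj y"
    and cj_one: "cj 1 = 1"
    and cj_invol: "\<forall>x. cj (cj x) = x"
    and TT_mult: "\<forall>x\<in>TT. \<forall>y\<in>TT. x * y \<in> TT"
    and TT_nz: "0 \<notin> TT"
    and TT_m1: "- 1 \<in> TT"
    and TT_star: "cj ` TT = TT"
    and mpos: "0 < m" and npos: "0 < n"
    and la: "length a = n + 1" and lb: "length b = n + 1"
    and lc: "length c = n" and ld: "length d = n"
    and lf: "length f = m + 1" and lg: "length g = m + 1"
    and lh: "length h = m" and le: "length e = m"
    and Ta: "set a \<subseteq> TT" and Tb: "set b \<subseteq> TT" and Tc: "set c \<subseteq> TT" and Td: "set d \<subseteq> TT"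
    and Tf: "set f \<subseteq> TT" and Tg: "set g \<subseteq> TT" and Th: "set h \<subseteq> TT" and Te: "set e \<subseteq> TT"
  shows
    "let a' = vslash0 a; b' = vslash0 b; c' = v0slash c; d' = v0slash d;
         f' = vslash0 f; g' = vslash0 g; h' = v0slash h; e' = v0slash e;
         Q = madd (msub (madd (outer (vstar cj f') a') (outer g' c')) (outer e' (vstar cj b')))
                  (outer h' d');
         R = msub (madd (madd (outer (vstar cj f') b') (outer (vstar cj g') d')) (outer e' (vstar cj a')))
                  (outer (vstar cj h') c');
         S = msub (msub (msub (outer (vstar cj g') a') (outer f' c')) (outer h' b'))
                  (outer e' (vstar cj d'));
         T = madd (madd (msub (outer g' b') (outer f' d')) (outer (vstar cj h') a'))
                  (outer e' (vstar cj c'))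
     in (\<forall>M\<in>{Q, R, S, T}. \<forall>row\<in>set M. set row \<subseteq> TT) \<and>
        psiM Q * lpstar2 cj (psiM Q) + psiM R * lpstar2 cj (psiM R)
          + psiM S * lpstar2 cj (psiM S) + psiM T * lpstar2 cj (psiM T)
        = subst_x_sq (psi a * lpstar1 cj (psi a) + psi b * lpstar1 cj (psi b)
                      + psi c * lpstar1 cj (psi c) + psi d * lpstar1 cj (psi d))
          * subst_y_sq (psi e * lpstar1 cj (psi e) + psi f * lpstar1 cj (psi f)
                      + psi g * lpstar1 cj (psi g) + psi h * lpstar1 cj (psi h))"
proof -
  define a' where "a' = vslash0 a"
  define b' where "b' = vslash0 b"
  define c' where "c' = v0slash c"
  define d' where "d' = v0slash d"
  define f' where "f' = vslash0 f"
  define g' where "g' = vslash0 g"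
  define h' where "h' = v0slash h"
  define e' where "e' = v0slash e"
  define Q where "Q = madd (msub (madd (outer (vstar cj f') a') (outer g' c')) (outer e' (vstar cj b')))
                  (outer h' d')"
  define R where "R = msub (madd (madd (outer (vstar cj f') b') (outer (vstar cj g') d')) (outer e' (vstar cj a')))
                  (outer (vstar cj h') c')"
  define S where "S = msub (msub (msub (outer (vstar cj g') a') (outer f' c')) (outer h' b'))
                  (outer e' (vstar cj d'))"
  define T where "T = madd (madd (msub (outer g' b') (outer f' d')) (outer (vstar cj h') a'))
                  (outer e' (vstar cj c'))"
  have cadd: "\<And>x y. cj (x + y) = cj x + cj y" and cmult: "\<And>x y. cj (x * y) = cj x * cj y"
    and cinv: "\<And>x. cj (cj x) = x" using cj_add cj_mult cj_invol by auto
  note st = st2_add[OF cadd cmult cinv] st2_diff[OF cadd cmult cinv] st2_mult[OF cadd cmult cinv]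
    st2_inv[OF cadd cmult cinv]
  note XY = X1[OF cadd cmult cinv] X2 X3[OF cadd cmult cinv] X4[OF cadd cmult cinv]
    Y1[OF cadd cmult cinv] Y2 Y3[OF cadd cmult cinv] Y4[OF cadd cmult cinv]
  have lens: "length a' = 2*n+1" "length b' = 2*n+1" "length c' = 2*n+1" "length d' = 2*n+1"
    "length f' = 2*m+1" "length g' = 2*m+1" "length h' = 2*m+1" "length e' = 2*m+1"
    by (simp_all add: a'_def b'_def c'_def d'_def e'_def f'_def g'_def h'_def la lb lc ld le lf lg lh)
  have shps: "shp Q (2*m+1) (2*n+1)" "shp R (2*m+1) (2*n+1)" "shp S (2*m+1) (2*n+1)" "shp T (2*m+1) (2*n+1)"
    unfolding Q_def R_def S_def T_def
    by (intro shp_madd shp_msub shp_outer'; simp add: lens)+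
  have eqs: "psiM Q * lpstar2 cj (psiM Q) + psiM R * lpstar2 cj (psiM R)
          + psiM S * lpstar2 cj (psiM S) + psiM T * lpstar2 cj (psiM T)
        = subst_x_sq (psi a * lpstar1 cj (psi a) + psi b * lpstar1 cj (psi b)
                      + psi c * lpstar1 cj (psi c) + psi d * lpstar1 cj (psi d))
          * subst_y_sq (psi e * lpstar1 cj (psi e) + psi f * lpstar1 cj (psi f)
                      + psi g * lpstar1 cj (psi g) + psi h * lpstar1 cj (psi h))"
  proof -
    have pQ: "psiM Q = psiM (outer (vstar cj f') a') + psiM (outer g' c') - psiM (outer e' (vstar cj b')) + psiM (outer h' d')"
      unfolding Q_def
      by (subst psiM_madd[of _ "2*m+1" "2*n+1"] psiM_msub[of _ "2*m+1" "2*n+1"];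
          (intro shp_madd shp_msub shp_outer')?; simp add: lens)+
    have pR: "psiM R = psiM (outer (vstar cj f') b') + psiM (outer (vstar cj g') d') + psiM (outer e' (vstar cj a')) - psiM (outer (vstar cj h') c')"
      unfolding R_def
      by (subst psiM_madd[of _ "2*m+1" "2*n+1"] psiM_msub[of _ "2*m+1" "2*n+1"];
          (intro shp_madd shp_msub shp_outer')?; simp add: lens)+
    have pS: "psiM S = psiM (outer (vstar cj g') a') - psiM (outer f' c') - psiM (outer h' b') - psiM (outer e' (vstar cj d'))"
      unfolding S_def
      by (subst psiM_madd[of _ "2*m+1" "2*n+1"] psiM_msub[of _ "2*m+1" "2*n+1"];
          (intro shp_madd shp_msub shp_outer')?; simp add: lens)+
    have pT: "psiM T = psiM (outer g' b') - psiM (outer f' d') + psiM (outer (vstar cj h') a') + psiM (outer e' (vstar cj c'))"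
      unfolding T_def
      by (subst psiM_madd[of _ "2*m+1" "2*n+1"] psiM_msub[of _ "2*m+1" "2*n+1"];
          (intro shp_madd shp_msub shp_outer')?; simp add: lens)+
    show ?thesis
      unfolding pQ pR pS pT psiM_outer
      unfolding a'_def b'_def c'_def d'_def e'_def f'_def g'_def h'_def
      using la lb lf lg
      apply (simp only: XY st sx_add[OF cadd cmult cinv] sx_mult[OF cadd cmult cinv]
          sy_add[OF cadd cmult cinv] sy_mult[OF cadd cmult cinv]
          sx_st[OF cadd cmult cinv] sy_st[OF cadd cmult cinv] le_add2)
      apply (rule ring_id)
      done
  qed
  have c0: "cj 0 = 0" using c0[OF cadd cmult cinv] .
  have ttm: "x * y \<in> TT" if "x \<in> TT" "y \<in> TT" for x y using TT_mult that by blast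
  have ttn: "- x \<in> TT" if "x \<in> TT" for x using ttm[OF TT_m1 that] by simp
  have ttc: "cj x \<in> TT" if "x \<in> TT" for x using TT_star that by blast
  have ttnth: "xs ! k \<in> TT" if "k < length xs" "set xs \<subseteq> TT" for xs k using that nth_mem by blast
  have na: "j < 2*n+1 \<Longrightarrow> a' ! j = (if even j then a ! (j div 2) else 0)" for j
    unfolding a'_def by (rule nth_vslash0) (simp add: la)
  have nb: "j < 2*n+1 \<Longrightarrow> b' ! j = (if even j then b ! (j div 2) else 0)" for j
    unfolding b'_def by (rule nth_vslash0) (simp add: lb)
  have nc: "j < 2*n+1 \<Longrightarrow> c' ! j = (if odd j then c ! (j div 2) else 0)" for j
    unfolding c'_def by (rule nth_v0slash) (simp add: lc)
  have nd: "j < 2*n+1 \<Longrightarrow> d' ! j = (if odd j then d ! (j div 2) else 0)" for j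
    unfolding d'_def by (rule nth_v0slash) (simp add: ld)
  have nf: "j < 2*m+1 \<Longrightarrow> f' ! j = (if even j then f ! (j div 2) else 0)" for j
    unfolding f'_def by (rule nth_vslash0) (simp add: lf)
  have ng: "j < 2*m+1 \<Longrightarrow> g' ! j = (if even j then g ! (j div 2) else 0)" for j
    unfolding g'_def by (rule nth_vslash0) (simp add: lg)
  have nh: "j < 2*m+1 \<Longrightarrow> h' ! j = (if odd j then h ! (j div 2) else 0)" for j
    unfolding h'_def by (rule nth_v0slash) (simp add: lh)
  have ne: "j < 2*m+1 \<Longrightarrow> e' ! j = (if odd j then e ! (j div 2) else 0)" for j
    unfolding e'_def by (rule nth_v0slash) (simp add: le)
  have ev: "i \<le> 2*k \<Longrightarrow> even (2*k - i) = even i" for i k :: nat by presburger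
  have entries: "Q!i!j \<in> TT \<and> R!i!j \<in> TT \<and> S!i!j \<in> TT \<and> T!i!j \<in> TT"
    if ij: "i < 2*m+1" "j < 2*n+1" for i j
  proof -
    have i2: "2*m - i < 2*m+1" and j2: "2*n - j < 2*n+1" by auto
    note nm = nth_madd[of _ "2*m+1" "2*n+1"] nth_msub[of _ "2*m+1" "2*n+1"]
    have bnd: "i div 2 < m + 1" "j div 2 < n + 1" "(2*m - i) div 2 < m + 1" "(2*n - j) div 2 < n + 1"
      using ij by auto
    have bnd2: "odd i \<Longrightarrow> i div 2 < m" "odd j \<Longrightarrow> j div 2 < n"
      "odd i \<Longrightarrow> (2*m - i) div 2 < m" "odd j \<Longrightarrow> (2*n - j) div 2 < n"
      using ij by presburger+
    show ?thesis
      unfolding Q_def R_def S_def T_def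
      using ij
      apply (simp add: nm shp_madd shp_msub shp_outer' lens nth_outer nth_vstar)
      apply (simp add: na nb nc nd ne nf ng nh i2 j2 ev c0)
      apply (cases "even i"; cases "even j")
         apply (simp_all add: ev)
         apply (use bnd bnd2 in \<open>(intro conjI ttm ttn ttc ttnth; simp add: la lb lc ld le lf lg lh Ta Tb Tc Td Te Tf Tg Th)+\<close>)
      done
  qed
  have ents: "\<forall>M\<in>{Q, R, S, T}. \<forall>row\<in>set M. set row \<subseteq> TT"
    using mem_from_entries[OF shps(1)] mem_from_entries[OF shps(2)]
      mem_from_entries[OF shps(3)] mem_from_entries[OF shps(4)] entries by auto
  show ?thesis
    unfolding Let_def
    unfolding a'_def[symmetric] b'_def[symmetric] c'_def[symmetric] d'_def[symmetric]
      e'_def[symmetric] f'_def[symmetric] g'_def[symmetric] h'_def[symmetric]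
    unfolding Q_def[symmetric] R_def[symmetric] S_def[symmetric] T_def[symmetric]
    using ents eqs by blast
qed

end
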